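(* Let $T>0$, $C_1>0$, and let $H:(0,1)^n\times\mathbb S(n)\to\mathbb R^n$, $B:(0,1)^n\times\mathbb S(n)\to\mathbb S(n)$ be $C^1$ with $H_i(\mu,p)\ge-C_1$ for all $(\mu,p)$ and $i$; let $g:[0,1]^n\to\mathbb R^n$, $\lambda\in[0,1]$, $t\in[0,T)$, $\mu\in\mathcal P_0(\mathbb G)$. If $(\phi,\rho):[t,T]\to\mathbb R^n\times(0,1)^n$ is a classical solution of $$\dot\phi=H(\rho,\lambda\nabla_{\mathbb G}\phi)-\Delta_{\mathbb G}\phi,\quad\dot\rho=\nabla_{\mathbb G}\cdot B(\rho,\lambda\nabla_{\mathbb G}\phi)+\Delta_{\mathbb G}\rho\ \text{ on }(t,T),\quad\phi(T)=g(\rho(T)),\ \rho(t)=\mu,$$ then $\max_{1\le i\le n}\phi_i(s)\le C_1(T-s)+\max_{1\le i\le n}\phi_i(T)$ for all $s\in[t,T]$.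
   Context: $\mathbb G$: finite connected simple undirected graph on $\{1,\dots,n\}$ with symmetric edge weights $\omega_{ij}>0$ iff $(i,j)\in\mathbb E$. $\mathbb S(n)$: skew-symmetric matrices. $(\nabla_{\mathbb G}u)^{ij}=\sqrt{\omega_{ij}}(u^i-u^j)$, $(\nabla_{\mathbb G}\cdot m)^i=\sum_{j\ne i}\sqrt{\omega_{ij}}m^{ji}$, $(\Delta_{\mathbb G}u)^i=\sum_j\omega_{ij}(u^j-u^i)$. $\mathcal P_0(\mathbb G)$: probability vectors with positive entries. Classical solution: a $C^1$ pair satisfying the system pointwise. *)

theory Defs
  imports "HOL-Analysis.Analysis"
begin

text \<open>Vertices of the graph are the elements of the finite type 'n (playing the role of {1..n}).
  Edge weights are a matrix w with w i j > 0 iff (i,j) is an edge, w i j = 0 otherwise.\<close>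

definition weighted_graph :: "real^'n^'n \<Rightarrow> bool" where
  "weighted_graph w \<longleftrightarrow>
     (\<forall>i j. w$i$j = w$j$i) \<and> (\<forall>i j. w$i$j \<ge> 0) \<and> (\<forall>i. w$i$i = 0) \<and>
     (\<forall>i::'n. ({(a,b). w$a$b > 0})\<^sup>* `` {i} = UNIV)"

definition skew_mats :: "(real^'n^'n) set" where
  "skew_mats = {A. transpose A = - A}"

definition grad_G :: "real^'n^'n \<Rightarrow> real^'n \<Rightarrow> real^'n^'n" where
  "grad_G w u = (\<chi> i j. sqrt (w$i$j) * (u$i - u$j))"

definition div_G :: "real^'n^'n \<Rightarrow> real^'n^'n \<Rightarrow> real^'n" where
  "div_G w m = (\<chi> i. \<Sum>j\<in>UNIV - {i}. sqrt (w$i$j) * m$j$i)"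

definition lap_G :: "real^'n^'n \<Rightarrow> real^'n \<Rightarrow> real^'n" where
  "lap_G w u = (\<chi> i. \<Sum>j\<in>UNIV. w$i$j * (u$j - u$i))"

definition P0 :: "(real^'n) set" where
  "P0 = {m. (\<forall>i. m$i > 0) \<and> (\<Sum>i\<in>UNIV. m$i) = 1}"

definition C1_on :: "'a::real_normed_vector set \<Rightarrow> ('a \<Rightarrow> 'b::real_normed_vector) \<Rightarrow> bool" where
  "C1_on S f \<longleftrightarrow> (\<exists>f'::'a \<Rightarrow> 'a \<Rightarrow>\<^sub>L 'b.
      (\<forall>x\<in>S. (f has_derivative blinfun_apply (f' x)) (at x within S)) \<and> continuous_on S f')"

definition classical_solution ::
  "real^'n^'n \<Rightarrow> (real^'n \<Rightarrow> real^'n^'n \<Rightarrow> real^'n) \<Rightarrow> (real^'n \<Rightarrow> real^'n^'n \<Rightarrow> real^'n^'n)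
   \<Rightarrow> (real^'n \<Rightarrow> real^'n) \<Rightarrow> real \<Rightarrow> real \<Rightarrow> real \<Rightarrow> real^'n
   \<Rightarrow> (real \<Rightarrow> real^'n) \<Rightarrow> (real \<Rightarrow> real^'n) \<Rightarrow> bool" where
  "classical_solution w H B g lam t T mu phi rho \<longleftrightarrow>
     C1_on {t..T} phi \<and> C1_on {t..T} rho \<and>
     (\<forall>s\<in>{t..T}. rho s \<in> box 0 1) \<and>
     (\<forall>s\<in>{t<..<T}.
        (phi has_vector_derivative (H (rho s) (lam *\<^sub>R grad_G w (phi s)) - lap_G w (phi s))) (at s) \<and>
        (rho has_vector_derivative (div_G w (B (rho s) (lam *\<^sub>R grad_G w (phi s))) + lap_G w (rho s))) (at s)) \<and>
     phi T = g (rho T) \<and> rho t = mu"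

end

theory Submission
  imports Defs
begin

lemma core_step:
  fixes f :: "'n::finite \<Rightarrow> real \<Rightarrow> real" and a b K :: real
  assumes ab: "a < b"
    and cont: "\<And>i. continuous_on {a..b} (f i)"
    and der: "\<And>s i. s \<in> {a..<b} \<Longrightarrow> (\<forall>j. f j s \<le> f i s) \<Longrightarrow>
               \<exists>l>0. (f i has_real_derivative l) (at s)"
    and bnd: "\<And>k. f k b \<le> K"
  shows "f j a \<le> K"
proof (rule ccontr)
  assume neg: "\<not> f j a \<le> K"
  have "\<forall>i. \<exists>s\<in>{a..b}. \<forall>y\<in>{a..b}. f i y \<le> f i s"
    using continuous_attains_sup[OF compact_Icc _ cont] ab by auto
  then obtain sm where sm: "\<And>i. sm i \<in> {a..b}" "\<And>i y. y \<in> {a..b} \<Longrightarrow> f i y \<le> f i (sm i)"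
    by metis
  define vals where "vals = range (\<lambda>i. f i (sm i))"
  have fin: "finite vals" unfolding vals_def by simp
  have mv: "Max vals \<in> vals" using fin Max_in unfolding vals_def by blast
  have "\<exists>i. f i (sm i) = Max vals"
  proof -
    from mv obtain i where "Max vals = f i (sm i)" unfolding vals_def by (rule rangeE)
    then show ?thesis by metis
  qed
  then obtain i where i: "f i (sm i) = Max vals" by blast
  have imax: "\<And>k y. y \<in> {a..b} \<Longrightarrow> f k y \<le> f i (sm i)"
  proof -
    fix k y assume "y \<in> {a..b}"
    then have "f k y \<le> f k (sm k)" by (rule sm(2))
    also have "\<dots> \<le> Max vals" using fin unfolding vals_def by auto
    finally show "f k y \<le> f i (sm i)" using i by simp
  qed
  define s1 where "s1 = sm i"
  have "f j a \<le> f i s1" using imax ab unfolding s1_def by auto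
  then have "f i s1 > K" using neg by simp
  then have "s1 \<noteq> b" using bnd[of i] by auto
  then have s1: "s1 \<in> {a..<b}" using sm(1)[of i] unfolding s1_def by auto
  have "\<forall>k. f k s1 \<le> f i s1" using imax s1 unfolding s1_def by auto
  then obtain l where l: "l > 0" "(f i has_real_derivative l) (at s1)" using der s1 by blast
  from DERIV_pos_inc_right[OF l(2) l(1)] obtain d where d: "d > 0"
    "\<And>h. h > 0 \<Longrightarrow> h < d \<Longrightarrow> f i s1 < f i (s1 + h)" by blast
  define h where "h = min (d/2) ((b - s1)/2)"
  have h1: "h \<le> (b - s1)/2" unfolding h_def by (rule min.cobounded2)
  have h2: "h \<le> d/2" unfolding h_def by (rule min.cobounded1)
  have h3: "h > 0" using d s1 unfolding h_def by auto
  have h: "h > 0" "h < d" "s1 + h \<in> {a..b}" using h1 h2 h3 d s1 by auto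
  have "f i s1 < f i (s1 + h)" using d h by auto
  moreover have "f i (s1 + h) \<le> f i s1" using imax h(3) unfolding s1_def by auto
  ultimately show False by simp
qed

theorem lemma3p2:
  fixes w :: "real^'n^'n"
    and H :: "real^'n \<Rightarrow> real^'n^'n \<Rightarrow> real^'n"
    and B :: "real^'n \<Rightarrow> real^'n^'n \<Rightarrow> real^'n^'n"
    and g :: "real^'n \<Rightarrow> real^'n"
    and T C1 lam t :: real and mu :: "real^'n"
    and phi rho :: "real \<Rightarrow> real^'n"
  assumes "weighted_graph w"
    and "T > 0" and "C1 > 0"
    and "C1_on (box 0 1 \<times> skew_mats) (\<lambda>(x, p). H x p)"
    and "C1_on (box 0 1 \<times> skew_mats) (\<lambda>(x, p). B x p)"
    and "\<forall>x\<in>box 0 1. \<forall>p\<in>skew_mats. B x p \<in> skew_mats"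
    and "\<forall>x\<in>box 0 1. \<forall>p\<in>skew_mats. \<forall>i. H x p $ i \<ge> - C1"
    and "0 \<le> lam" and "lam \<le> 1"
    and "0 \<le> t" and "t < T"
    and "mu \<in> P0"
    and "classical_solution w H B g lam t T mu phi rho"
  shows "\<forall>s\<in>{t..T}. Max (range (\<lambda>i. phi s $ i)) \<le> C1 * (T - s) + Max (range (\<lambda>i. phi T $ i))"
proof -
  note cs = assms(13)[unfolded classical_solution_def]
  define M where "M = Max (range (\<lambda>i. phi T $ i))"
  have MT: "\<And>k. phi T $ k \<le> M" unfolding M_def by simp
  have wsym: "\<And>i j. w$i$j = w$j$i" and wnn: "\<And>i j. w$i$j \<ge> 0"
    using assms(1) unfolding weighted_graph_def by auto
  have skew: "\<And>u. lam *\<^sub>R grad_G w u \<in> skew_mats"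
    unfolding skew_mats_def grad_G_def transpose_def
    by (simp add: vec_eq_iff wsym algebra_simps)
  from cs obtain phi' where phi': "\<forall>x\<in>{t..T}. (phi has_derivative blinfun_apply (phi' x)) (at x within {t..T})"
    unfolding C1_on_def by blast
  have pcont: "continuous_on {t..T} phi"
    using phi' has_derivative_continuous continuous_on_eq_continuous_within by blast
  have pcc: "\<And>k. continuous_on {t..T} (\<lambda>s. phi s $ k)"
    using pcont by (intro continuous_intros)
  have lapmax: "lap_G w u $ i \<le> 0" if "\<forall>j. u $ j \<le> u $ i" for u :: "real^'n" and i
    unfolding lap_G_def using that wnn
    by (auto intro!: sum_nonpos mult_nonneg_nonpos)
  have main: "phi s $ j \<le> C1 * (T - s) + M" if s: "s \<in> {t<..T}" for s j
  proof (cases "s = T")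
    case True then show ?thesis using MT by simp
  next
    case False
    with s have sT: "s < T" by auto
    have "phi s $ j - (C1 + e) * (T - s) \<le> M" if e: "e > 0" for e
    proof -
      define f where "f = (\<lambda>k x. phi x $ k - (C1 + e) * (T - x))"
      have "f j s \<le> M"
      proof (rule core_step[OF sT])
        fix k show "continuous_on {s..T} (f k)"
          unfolding f_def using s
          by (intro continuous_intros continuous_on_subset[OF pcc[of k]]) auto
      next
        fix k show "f k T \<le> M" unfolding f_def using MT by simp
      next
        fix x i assume x: "x \<in> {s..<T}" and mx: "\<forall>k. f k x \<le> f i x"
        have xo: "x \<in> {t<..<T}" using x s by auto
        have xc: "x \<in> {t..T}" using xo by auto
        define v where "v = H (rho x) (lam *\<^sub>R grad_G w (phi x)) - lap_G w (phi x)"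
        have d: "(phi has_vector_derivative v) (at x)" using cs xo unfolding v_def by blast
        have dk: "((\<lambda>y. phi y $ i) has_vector_derivative v $ i) (at x)"
          using bounded_linear.has_vector_derivative[OF bounded_linear_vec_nth d] by simp
        have dk': "((\<lambda>y. phi y $ i) has_real_derivative v $ i) (at x)"
          using dk by (simp add: has_real_derivative_iff_has_vector_derivative)
        have df: "(f i has_real_derivative (v $ i + (C1 + e))) (at x)"
          unfolding f_def by (rule derivative_eq_intros dk' | simp)+
        have "\<forall>k. phi x $ k \<le> phi x $ i" using mx unfolding f_def by auto
        then have "lap_G w (phi x) $ i \<le> 0" by (rule lapmax)
        moreover have "H (rho x) (lam *\<^sub>R grad_G w (phi x)) $ i \<ge> - C1"
          using assms(7) cs xc skew by blast
        ultimately have "v $ i + (C1 + e) > 0" unfolding v_def using e by simp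
        then show "\<exists>l>0. (f i has_real_derivative l) (at x)" using df by blast
      qed
      then show ?thesis unfolding f_def .
    qed
    note E = this
    have "phi s $ j \<le> C1 * (T - s) + M"
    proof (rule field_le_epsilon)
      fix e :: real assume e: "e > 0"
      have "e / (T - s) > 0" using e sT by simp
      from E[OF this] have "phi s $ j - (C1 + e / (T - s)) * (T - s) \<le> M" .
      moreover have "(C1 + e / (T - s)) * (T - s) = C1 * (T - s) + e"
        using sT by (simp add: field_simps)
      ultimately show "phi s $ j \<le> C1 * (T - s) + M + e" by simp
    qed
    then show ?thesis by simp
  qed
  have all: "phi s $ j \<le> C1 * (T - s) + M" if s: "s \<in> {t..T}" for s j
  proof (cases "s = t")
    case False then show ?thesis using main s by auto
  next
    case True
    have c: "continuous_on {t..T} (\<lambda>s. phi s $ j - C1 * (T - s))"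
      by (intro continuous_on_diff pcc continuous_intros)
    have lim: "((\<lambda>s. phi s $ j - C1 * (T - s)) \<longlongrightarrow> phi t $ j - C1 * (T - t)) (at t within {t..T})"
      using c assms(11) unfolding continuous_on_def by auto
    have ev: "\<forall>\<^sub>F s in at t within {t..T}. phi s $ j - C1 * (T - s) \<le> M"
      unfolding eventually_at_filter using main
      by (intro always_eventually) (smt (verit) atLeastAtMost_iff greaterThanAtMost_iff)
    have nb: "at t within {t..T} \<noteq> bot"
      using assms(11) by (simp add: trivial_limit_within)
    have "phi t $ j - C1 * (T - t) \<le> M" by (rule tendsto_upperbound[OF lim ev nb])
    then show ?thesis using True by simp
  qed
  show ?thesis
  proof
    fix s assume s: "s \<in> {t..T}"
    show "Max (range (\<lambda>i. phi s $ i)) \<le> C1 * (T - s) + Max (range (\<lambda>i. phi T $ i))"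
      using all[OF s] unfolding M_def[symmetric] by (subst Max_le_iff) auto
  qed
qed

end
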